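(* Let $p\ge1$, $\phi_1,\dots,\phi_p:\mathbb Z\to\mathbb C$ and integers $t>s$. Then $F_{t,s}=\Gamma_t\Gamma_{t-1}\cdots\Gamma_{s+1}$ is the $p\times p$ matrix whose $(i,m)$ entry is $\xi^{(m)}_{t-i+1,s}$, for $1\le i,m\le p$.
   Context: $\Gamma_t$ is the $p\times p$ companion matrix with first row $(\phi_1(t),\dots,\phi_p(t))$, entries $(i,i-1)$ equal to $1$ for $2\le i\le p$, and all other entries $0$. Convention: $\phi_l(t)=0$ for $l>p$. For integers $t>s$ and $1\le m\le p$, $\Phi^{(m)}_{t,s}$ is the $(t-s)\times(t-s)$ lower Hessenberg matrix whose $(i,j)$ entry is: $\phi_{m+i-1}(s+i)$ if $j=1$; $-1$ if $j=i+1$; $\phi_{i-j+1}(s+i)$ if $2\le j\le i$; $0$ if $j>i+1$. For $t\ge s-p+1$: $\xi^{(m)}_{t,s}=\det\Phi^{(m)}_{t,s}$ if $t>s$; $\xi^{(m)}_{t,s}=1$ if $t=s-m+1$; $\xi^{(m)}_{t,s}=0$ if $s-p+1\le t\le s$, $t\ne s-m+1$. *)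

theory Defs
  imports "Jordan_Normal_Form.Determinant"
begin

definition phic :: "nat \<Rightarrow> (nat \<Rightarrow> int \<Rightarrow> complex) \<Rightarrow> nat \<Rightarrow> int \<Rightarrow> complex" where
  "phic p phi l t = (if 1 \<le> l \<and> l \<le> p then phi l t else 0)"

text \<open>Companion matrix Gamma_t (0-based indices: entry (i,j) is paper entry (i+1,j+1)).\<close>
definition Gamma :: "nat \<Rightarrow> (nat \<Rightarrow> int \<Rightarrow> complex) \<Rightarrow> int \<Rightarrow> complex mat" where
  "Gamma p phi t = mat p p (\<lambda>(i,j). if i = 0 then phic p phi (j+1) t
                                     else if i = j + 1 then 1 else 0)"

fun Gprod :: "nat \<Rightarrow> (nat \<Rightarrow> int \<Rightarrow> complex) \<Rightarrow> int \<Rightarrow> nat \<Rightarrow> complex mat" where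
  "Gprod p phi s 0 = 1\<^sub>m p"
| "Gprod p phi s (Suc n) = Gamma p phi (s + int (Suc n)) * Gprod p phi s n"

definition F :: "nat \<Rightarrow> (nat \<Rightarrow> int \<Rightarrow> complex) \<Rightarrow> int \<Rightarrow> int \<Rightarrow> complex mat" where
  "F p phi t s = Gprod p phi s (nat (t - s))"

text \<open>Hessenberg matrix Phi^{(m)}_{t,s}, of size (t-s)x(t-s); 0-based entry (i,j) is paper entry (i+1,j+1).\<close>
definition PhiH :: "nat \<Rightarrow> (nat \<Rightarrow> int \<Rightarrow> complex) \<Rightarrow> nat \<Rightarrow> int \<Rightarrow> int \<Rightarrow> complex mat" where
  "PhiH p phi m t s = mat (nat (t - s)) (nat (t - s)) (\<lambda>(i0,j0).
      let i = i0 + 1; j = j0 + 1 in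
      if j = 1 then phic p phi (m + i - 1) (s + int i)
      else if j = i + 1 then -1
      else if 2 \<le> j \<and> j \<le> i then phic p phi (i - j + 1) (s + int i)
      else 0)"

definition xi :: "nat \<Rightarrow> (nat \<Rightarrow> int \<Rightarrow> complex) \<Rightarrow> nat \<Rightarrow> int \<Rightarrow> int \<Rightarrow> complex" where
  "xi p phi m t s = (if t > s then det (PhiH p phi m t s)
                     else if t = s - int m + 1 then 1 else 0)"

end

theory Submission
  imports Defs
begin

definition lead :: "complex mat \<Rightarrow> nat \<Rightarrow> complex mat" where
  "lead A k = mat k k (\<lambda>(i,j). A $$ (i,j))"

lemma hess_det:
  fixes A :: "complex mat"
  assumes "A \<in> carrier_mat (Suc n) (Suc n)"
    and "\<And>i. i < n \<Longrightarrow> A $$ (i, Suc i) = -1"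
    and "\<And>i j. j < Suc n \<Longrightarrow> Suc i < j \<Longrightarrow> A $$ (i,j) = 0"
  shows "det A = (\<Sum>j<Suc n. A $$ (n, j) * det (lead A j))"
  using assms
proof (induction n arbitrary: A)
  case 0
  have "det A = (\<Sum>i<1. A $$ (i,0) * cofactor A i 0)"
    using laplace_expansion_column[OF 0(1)] by simp
  also have "\<dots> = A $$ (0,0)" unfolding cofactor_def
    using det_dim_zero[of "mat_delete A 0 0"] mat_delete_carrier[OF 0(1), of 0 0] by simp
  finally show ?case by (simp add: lead_def)
next
  case (Suc n)
  let ?B = "mat_delete A n (Suc n)"
  have Bc: "?B \<in> carrier_mat (Suc n) (Suc n)" using mat_delete_carrier[OF Suc(2)] by simp
  have IH: "det ?B = (\<Sum>j<Suc n. ?B $$ (n, j) * det (lead ?B j))"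
  proof (rule Suc.IH[OF Bc])
    fix i assume "i < n" thus "?B $$ (i, Suc i) = -1" using Suc(2,3)
      by (simp add: mat_delete_def)
  next
    fix i j assume "j < Suc n" "Suc i < j" thus "?B $$ (i, j) = 0" using Suc(2,4)
      by (simp add: mat_delete_def)
  qed
  have B1: "?B $$ (n, j) * det (lead ?B j) = A $$ (Suc n, j) * det (lead A j)" if "j < Suc n" for j
  proof -
    have "lead ?B j = lead A j" unfolding lead_def
      by (rule eq_matI) (use that Suc(2) in \<open>auto simp: mat_delete_def\<close>)
    thus ?thesis using that Suc(2) by (simp add: mat_delete_def)
  qed
  have L: "lead A (Suc n) = mat_delete A (Suc n) (Suc n)" unfolding lead_def
    by (rule eq_matI) (use Suc(2) in \<open>auto simp: mat_delete_def\<close>)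
  have "det A = (\<Sum>i<Suc (Suc n). A $$ (i, Suc n) * cofactor A i (Suc n))"
    using laplace_expansion_column[OF Suc(2)] by simp
  also have "\<dots> = A $$ (n, Suc n) * cofactor A n (Suc n) + A $$ (Suc n, Suc n) * cofactor A (Suc n) (Suc n)"
    using Suc(4) by simp
  also have "\<dots> = det ?B + A $$ (Suc n, Suc n) * det (lead A (Suc n))"
    using Suc(3) by (simp add: cofactor_def L)
  also have "det ?B = (\<Sum>j<Suc n. A $$ (Suc n, j) * det (lead A j))"
    using IH B1 by simp
  finally show ?case by simp
qed

lemma PhiH_carrier: "PhiH p phi m t s \<in> carrier_mat (nat (t - s)) (nat (t - s))"
  by (simp add: PhiH_def)

lemma lead_PhiH:
  assumes "j \<le> nat (t - s)"
  shows "lead (PhiH p phi m t s) j = PhiH p phi m (s + int j) s"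
  unfolding lead_def
  by (rule eq_matI) (use assms in \<open>auto simp: PhiH_def Let_def\<close>)

lemma xi_rec:
  assumes ts: "t > s" and m: "m \<ge> 1"
  shows "xi p phi m t s = (\<Sum>k<p. phic p phi (Suc k) t * xi p phi m (t - 1 - int k) s)"
proof -
  define N where "N = nat (t - s)"
  obtain n where nN: "N = Suc n" using ts N_def by (metis gr0_implies_Suc zero_less_nat_eq diff_gt_0_iff_gt)
  have tN: "t = s + int N" using ts N_def by simp
  define A where "A = PhiH p phi m t s"
  define g where "g = (\<lambda>l. phic p phi l t * xi p phi m (t - int l) s)"
  have Ac: "A \<in> carrier_mat (Suc n) (Suc n)" using PhiH_carrier nN N_def A_def by metis
  have "det A = (\<Sum>j<Suc n. A $$ (n, j) * det (lead A j))"
  proof (rule hess_det[OF Ac])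
    fix i assume "i < n" thus "A $$ (i, Suc i) = -1" using nN N_def by (simp add: A_def PhiH_def)
  next
    fix i j assume "j < Suc n" "Suc i < j" thus "A $$ (i, j) = 0" using nN N_def
      by (simp add: A_def PhiH_def)
  qed
  also have "\<dots> = A $$ (n, 0) * det (lead A 0) + (\<Sum>i<n. A $$ (n, Suc i) * det (lead A (Suc i)))"
    by (rule sum.lessThan_Suc_shift)
  also have "A $$ (n, 0) * det (lead A 0) = phic p phi (N + m - 1) t"
  proof -
    have d: "det (lead A 0) = 1" by (rule det_dim_zero) (simp add: lead_def)
    have "nat (t - s) = Suc n" using nN N_def by simp
    hence "A $$ (n, 0) = phic p phi (m + Suc n - 1) (s + int (Suc n))"
      by (simp add: A_def PhiH_def)
    also have "s + int (Suc n) = t" using tN nN by simp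
    finally show ?thesis using d nN by (simp add: add.commute)
  qed
  also have "(\<Sum>i<n. A $$ (n, Suc i) * det (lead A (Suc i))) = (\<Sum>i<n. g (n - i))"
  proof (rule sum.cong[OF refl])
    fix i assume i: "i \<in> {..<n}"
    have "lead A (Suc i) = PhiH p phi m (s + int (Suc i)) s"
      unfolding A_def by (rule lead_PhiH) (use i nN N_def in auto)
    hence "det (lead A (Suc i)) = xi p phi m (t - int (n - i)) s"
      using i nN tN by (simp add: xi_def)
    moreover have "A $$ (n, Suc i) = phic p phi (n - i) t"
    proof -
      have e: "s + (1 + int n) = t" using tN nN by simp
      have "nat (t - s) = Suc n" using nN N_def by simp
      thus ?thesis using i by (simp add: A_def PhiH_def Suc_diff_Suc e)
    qed
    ultimately show "A $$ (n, Suc i) * det (lead A (Suc i)) = g (n - i)" by (simp add: g_def)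
  qed
  also have "(\<Sum>i<n. g (n - i)) = (\<Sum>l\<in>{1..<N}. g l)"
    by (rule sum.reindex_bij_witness[of _ "\<lambda>l. n - l" "\<lambda>i. n - i"]) (use nN in auto)
  finally have L: "xi p phi m t s = phic p phi (N + m - 1) t + (\<Sum>l\<in>{1..<N}. g l)"
    using ts by (simp add: xi_def A_def)
  have "(\<Sum>k<p. phic p phi (Suc k) t * xi p phi m (t - 1 - int k) s) = (\<Sum>l\<in>{1..p}. g l)"
    by (rule sum.reindex_bij_witness[of _ "\<lambda>l. l - 1" "Suc"]) (auto simp: g_def algebra_simps)
  also have "\<dots> = (\<Sum>l\<in>{1..N+p}. g l)"
    by (rule sum.mono_neutral_left) (auto simp: g_def phic_def)
  also have "{1..N+p} = {1..<N} \<union> {N..N+p}" using nN by auto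
  also have "sum g \<dots> = (\<Sum>l\<in>{1..<N}. g l) + (\<Sum>l\<in>{N..N+p}. g l)"
    by (rule sum.union_disjoint) auto
  also have "(\<Sum>l\<in>{N..N+p}. g l) = (\<Sum>l\<in>{N..N+p}. if l = N + m - 1 then phic p phi l t else 0)"
  proof (rule sum.cong[OF refl])
    fix l assume "l \<in> {N..N+p}"
    thus "g l = (if l = N + m - 1 then phic p phi l t else 0)"
      using tN m by (auto simp: g_def xi_def)
  qed
  also have "\<dots> = phic p phi (N + m - 1) t"
    using m by (subst sum.delta) (auto simp: phic_def)
  finally show ?thesis using L by simp
qed

lemma Gprod_xi:
  "Gprod p phi s n = mat p p (\<lambda>(i, m). xi p phi (m + 1) (s + int n - int i) s)"
proof (induction n)
  case 0
  show ?case by (rule eq_matI) (auto simp: xi_def)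
next
  case (Suc n)
  show ?case
  proof (rule eq_matI)
    fix i m assume i: "i < dim_row (mat p p (\<lambda>(i, m). xi p phi (m + 1) (s + int (Suc n) - int i) s))"
      and m: "m < dim_col (mat p p (\<lambda>(i, m). xi p phi (m + 1) (s + int (Suc n) - int i) s))"
    have i': "i < p" and m': "m < p" using i m by auto
    have "Gprod p phi s (Suc n) $$ (i, m) =
       (\<Sum>k<p. Gamma p phi (s + int (Suc n)) $$ (i, k) * xi p phi (m + 1) (s + int n - int k) s)"
      using i' m' by (simp add: Suc.IH Gamma_def scalar_prod_def lessThan_atLeast0)
    also have "\<dots> = xi p phi (m + 1) (s + int (Suc n) - int i) s"
    proof (cases "i = 0")
      case True
      have "xi p phi (m + 1) (s + int (Suc n)) s = (\<Sum>k<p. phic p phi (Suc k) (s + int (Suc n)) * xi p phi (m + 1) (s + int (Suc n) - 1 - int k) s)"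
        by (rule xi_rec) auto
      thus ?thesis using i' True by (simp add: Gamma_def algebra_simps)
    next
      case False
      then obtain i0 where i0: "i = Suc i0" by (cases i) auto
      have "(\<Sum>k<p. Gamma p phi (s + int (Suc n)) $$ (i, k) * xi p phi (m + 1) (s + int n - int k) s)
          = (\<Sum>k<p. if k = i0 then xi p phi (m + 1) (s + int n - int k) s else 0)"
        by (rule sum.cong[OF refl]) (use i' i0 in \<open>auto simp: Gamma_def\<close>)
      also have "\<dots> = xi p phi (m + 1) (s + int n - int i0) s" using i' i0 by simp
      finally show ?thesis using i0 by (simp add: algebra_simps)
    qed
    finally show "Gprod p phi s (Suc n) $$ (i, m) = mat p p (\<lambda>(i, m). xi p phi (m + 1) (s + int (Suc n) - int i) s) $$ (i, m)"
      using i' m' by simp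
  qed (auto simp: Gamma_def Suc.IH)
qed

theorem corollary2:
  fixes p :: nat and phi :: "nat \<Rightarrow> int \<Rightarrow> complex" and t s :: int
  assumes "p \<ge> 1" and "t > s"
  shows "F p phi t s = mat p p (\<lambda>(i, m). xi p phi (m + 1) (t - int i) s)"
  using assms by (simp add: F_def Gprod_xi)

end
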